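(* For all $\lambda\in\mathbf{k}$ and $v\in\mathcal{V}^{\mathrm{DR}}$, one has in $\mathcal{V}^{\mathrm{DR}}\otimes\mathcal{V}^{\mathrm{DR}}$: \[\Delta^{\mathcal{W},\mathrm{DR}}(\lambda+ve_1)=\lambda(1\otimes1)+\mathsf{r}\mathrm{row}\cdot\mathsf{r}\rho(v)\cdot\mathsf{r}\mathrm{col},\] i.e. $\Delta^{\mathcal{W},\mathrm{DR}}$ followed by $\mathcal{W}^{\mathrm{DR}}\otimes\mathcal{W}^{\mathrm{DR}}\hookrightarrow\mathcal{V}^{\mathrm{DR}}\otimes\mathcal{V}^{\mathrm{DR}}$ equals $\Delta_{\mathcal{O}^{\mathrm{DR}}_{\mathsf{mat}}}$ composed with the isomorphism $\mathcal{W}^{\mathrm{DR}}\cong\mathbf{k}\oplus(\mathcal{V}^{\mathrm{DR}},\cdot_{e_1})$.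
   Context: $\mathbf{k}$ is a commutative $\mathbb{Q}$-algebra. $\mathfrak{f}_2$ is the free Lie algebra on $e_0,e_1$, $\mathcal{V}^{\mathrm{DR}}=U(\mathfrak{f}_2)$, $e_\infty=-e_0-e_1$; $\mathcal{V}^{\mathrm{DR}}\otimes\mathcal{V}^{\mathrm{DR}}=U(\mathfrak{f}_2\oplus\mathfrak{f}_2)$ with $e_i=e_i\otimes1$, $f_i=1\otimes e_i$. $\mathrm{S}_{\mathfrak{g}}$ is the antiautomorphism of $U(\mathfrak{g})$ with $x\mapsto-x$ on $\mathfrak{g}$. $\rho:\mathcal{V}^{\mathrm{DR}}\to M_3(\mathcal{V}^{\mathrm{DR}}\otimes\mathcal{V}^{\mathrm{DR}})$ is the algebra morphism with $\rho(e_0)=\begin{pmatrix}e_0&0&0\\0&-e_1+f_0&-e_1\\0&-e_\infty-f_0&-e_\infty\end{pmatrix}$, $\rho(e_1)=\begin{pmatrix}e_1&-f_1&0\\-e_1&f_1&0\\0&0&0\end{pmatrix}$, and $\mathsf{r}\rho=M_3(\mathrm{S}_{\mathfrak{f}_2\oplus\mathfrak{f}_2})\circ{}^t(-)\circ\rho\circ\mathrm{S}_{\mathfrak{f}_2}$ (entrywise, transpose). $\mathsf{r}\mathrm{row}=(1,-1,0)$, $\mathsf{r}\mathrm{col}={}^t(e_1,-f_1,0)$. For an algebra $B$ and $e\in B$, $\mathbf{k}\oplus(B,\cdot_e)$ has product $(\lambda,b)(\lambda',b')=(\lambda\lambda',\lambda b'+\lambda'b+beb')$; $\Delta_{\mathcal{O}^{\mathrm{DR}}_{\mathsf{mat}}}(\lambda,v)=\lambda+\mathsf{r}\mathrm{row}\,\mathsf{r}\rho(v)\,\mathsf{r}\mathrm{col}$.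 $\mathcal{W}^{\mathrm{DR}}=\mathbf{k}\oplus\mathcal{V}^{\mathrm{DR}}e_1$ is a subalgebra, isomorphic to $\mathbf{k}\oplus(\mathcal{V}^{\mathrm{DR}},\cdot_{e_1})$ via $(\lambda,v)\mapsto\lambda+ve_1$, and freely generated by $e_0^ne_1$, $n\ge0$. $\Delta^{\mathcal{W},\mathrm{DR}}:\mathcal{W}^{\mathrm{DR}}\to\mathcal{W}^{\mathrm{DR}}\otimes\mathcal{W}^{\mathrm{DR}}$ is the algebra morphism with $\Delta^{\mathcal{W},\mathrm{DR}}(e_0^ne_1)=e_0^ne_1\otimes1+1\otimes e_0^ne_1-\sum_{k=0}^{n-1}e_0^ke_1\otimes e_0^{n-k-1}e_1$. *)

theory Defs
  imports Main
begin

text \<open>V^DR = U(f_2) is the free associative algebra k<e0,e1>;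
  an element is a finitely supported coefficient function on words in the letters X0 (=e0), X1 (=e1).
  V^DR (x) V^DR = U(f_2 + f_2) has k-basis the pairs of words (u,w) = u (x) w; the e_i act on the
  first, the f_i on the second component.\<close>

datatype x2 = X0 | X1

type_synonym 'k ncp = "x2 list \<Rightarrow> 'k"
type_synonym 'k tens = "x2 list \<times> x2 list \<Rightarrow> 'k"
type_synonym 'k mat3 = "nat \<Rightarrow> nat \<Rightarrow> 'k tens"

definition ncsupp :: "('k::zero) ncp \<Rightarrow> x2 list set" where
  "ncsupp a = {w. a w \<noteq> 0}"

definition ncmul :: "('k::comm_ring_1) ncp \<Rightarrow> 'k ncp \<Rightarrow> 'k ncp" where
  "ncmul a b = (\<lambda>w. \<Sum>i\<le>length w. a (take i w) * b (drop i w))"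

definition ncone :: "('k::comm_ring_1) ncp" where
  "ncone = (\<lambda>w. if w = [] then 1 else 0)"

definition ncgen :: "x2 \<Rightarrow> ('k::comm_ring_1) ncp" where
  "ncgen x = (\<lambda>w. if w = [x] then 1 else 0)"

definition ncadd :: "('k::comm_ring_1) ncp \<Rightarrow> 'k ncp \<Rightarrow> 'k ncp" where
  "ncadd a b = (\<lambda>w. a w + b w)"

definition ncscal :: "'k::comm_ring_1 \<Rightarrow> 'k ncp \<Rightarrow> 'k ncp" where
  "ncscal c a = (\<lambda>w. c * a w)"

text \<open>Antiautomorphism S of U(f_2): x |-> -x on generators.\<close>
definition ncS :: "('k::comm_ring_1) ncp \<Rightarrow> 'k ncp" where
  "ncS a = (\<lambda>w. (-1) ^ length w * a (rev w))"

definition tmul :: "('k::comm_ring_1) tens \<Rightarrow> 'k tens \<Rightarrow> 'k tens" where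
  "tmul a b = (\<lambda>(u, w). \<Sum>i\<le>length u. \<Sum>j\<le>length w.
                 a (take i u, take j w) * b (drop i u, drop j w))"

definition tbasis :: "x2 list \<Rightarrow> x2 list \<Rightarrow> ('k::comm_ring_1) tens" where
  "tbasis u w = (\<lambda>p. if p = (u, w) then 1 else 0)"

definition tone :: "('k::comm_ring_1) tens" where
  "tone = tbasis [] []"

definition tzero :: "('k::comm_ring_1) tens" where
  "tzero = (\<lambda>p. 0)"

definition tadd :: "('k::comm_ring_1) tens \<Rightarrow> 'k tens \<Rightarrow> 'k tens" where
  "tadd a b = (\<lambda>p. a p + b p)"

definition tneg :: "('k::comm_ring_1) tens \<Rightarrow> 'k tens" where
  "tneg a = (\<lambda>p. - a p)"

definition tscal :: "'k::comm_ring_1 \<Rightarrow> 'k tens \<Rightarrow> 'k tens" where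
  "tscal c a = (\<lambda>p. c * a p)"

definition teg :: "x2 \<Rightarrow> ('k::comm_ring_1) tens" where
  "teg x = tbasis [x] []"

definition tfg :: "x2 \<Rightarrow> ('k::comm_ring_1) tens" where
  "tfg x = tbasis [] [x]"

definition tS :: "('k::comm_ring_1) tens \<Rightarrow> 'k tens" where
  "tS a = (\<lambda>(u, w). (-1) ^ (length u + length w) * a (rev u, rev w))"

definition teinf :: "('k::comm_ring_1) tens" where
  "teinf = tneg (tadd (teg X0) (teg X1))"

definition matmul :: "('k::comm_ring_1) mat3 \<Rightarrow> 'k mat3 \<Rightarrow> 'k mat3" where
  "matmul A B = (\<lambda>i j p. \<Sum>k<3. tmul (A i k) (B k j) p)"

definition matid :: "('k::comm_ring_1) mat3" where
  "matid = (\<lambda>i j. if i = j then tone else tzero)"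

definition mat_of_rows :: "'k tens list list \<Rightarrow> 'k mat3" where
  "mat_of_rows L = (\<lambda>i j. L ! i ! j)"

fun rho_letter :: "x2 \<Rightarrow> ('k::comm_ring_1) mat3" where
  "rho_letter X0 = mat_of_rows
     [[teg X0, tzero, tzero],
      [tzero, tadd (tneg (teg X1)) (tfg X0), tneg (teg X1)],
      [tzero, tadd (tneg teinf) (tneg (tfg X0)), tneg teinf]]"
| "rho_letter X1 = mat_of_rows
     [[teg X1, tneg (tfg X1), tzero],
      [tneg (teg X1), tfg X1, tzero],
      [tzero, tzero, tzero]]"

text \<open>rho on a word is the product of the matrices of its letters; extended linearly
  (this is the unique algebra morphism with the prescribed values on e0, e1).\<close>
definition rho_word :: "x2 list \<Rightarrow> ('k::comm_ring_1) mat3" where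
  "rho_word w = foldr (\<lambda>x M. matmul (rho_letter x) M) w matid"

definition rho :: "('k::comm_ring_1) ncp \<Rightarrow> 'k mat3" where
  "rho v = (\<lambda>i j p. \<Sum>w\<in>ncsupp v. v w * rho_word w i j p)"

definition rrho :: "('k::comm_ring_1) ncp \<Rightarrow> 'k mat3" where
  "rrho v = (\<lambda>i j. tS (rho (ncS v) j i))"

definition rrow :: "('k::comm_ring_1) tens list" where
  "rrow = [tone, tneg tone, tzero]"

definition rcol :: "('k::comm_ring_1) tens list" where
  "rcol = [teg X1, tneg (tfg X1), tzero]"

definition DeltaO :: "'k::comm_ring_1 \<Rightarrow> 'k ncp \<Rightarrow> 'k tens" where
  "DeltaO lam v = (\<lambda>p. lam * tone p +
      (\<Sum>i<3. \<Sum>j<3. tmul (tmul (rrow ! i) (rrho v i j)) (rcol ! j) p))"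

text \<open>Value of Delta^W on the free generator e0^n e1.\<close>
definition dgen :: "nat \<Rightarrow> ('k::comm_ring_1) tens" where
  "dgen n = (\<lambda>p. tbasis (replicate n X0 @ [X1]) [] p + tbasis [] (replicate n X0 @ [X1]) p
     - (\<Sum>k<n. tbasis (replicate k X0 @ [X1]) (replicate (n - k - 1) X0 @ [X1]) p))"

text \<open>Delta^W on a word of W (empty or ending in e1): factor it as a product of generators
  e0^n1 e1 ... e0^nr e1 and multiply the values. (Words not in W get the junk value 0.)\<close>
fun dWw :: "nat \<Rightarrow> x2 list \<Rightarrow> ('k::comm_ring_1) tens" where
  "dWw n [] = (if n = 0 then tone else tzero)"
| "dWw n (X0 # w) = dWw (Suc n) w"
| "dWw n (X1 # w) = tmul (dgen n) (dWw 0 w)"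

definition DeltaW :: "('k::comm_ring_1) ncp \<Rightarrow> 'k tens" where
  "DeltaW x = (\<lambda>p. \<Sum>w\<in>ncsupp x. x w * dWw 0 w p)"

end

theory Submission
  imports Defs "HOL-Library.Function_Algebras"
begin

lemma tri: "(\<Sum>i\<le>(n::nat). \<Sum>i'\<le>i. F i' i) = (\<Sum>i'\<le>n. \<Sum>k\<le>n-i'. F i' (i'+k) :: 'a::comm_monoid_add)"
proof (induction n)
  case 0 then show ?case by simp
next
  case (Suc n)
  have "(\<Sum>i'\<le>Suc n. \<Sum>k\<le>Suc n-i'. F i' (i'+k)) = (\<Sum>i'\<le>n. \<Sum>k\<le>Suc n-i'. F i' (i'+k)) + F (Suc n) (Suc n)"
    by simp
  also have "(\<Sum>i'\<le>n. \<Sum>k\<le>Suc n-i'. F i' (i'+k)) = (\<Sum>i'\<le>n. (\<Sum>k\<le>n-i'. F i' (i'+k)) + F i' (Suc n))"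
  proof (rule sum.cong)
    fix i' assume "i' \<in> {..n}"
    then have "Suc n - i' = Suc (n - i')" by auto
    then show "(\<Sum>k\<le>Suc n-i'. F i' (i'+k)) = (\<Sum>k\<le>n-i'. F i' (i'+k)) + F i' (Suc n)"
      using \<open>i' \<in> {..n}\<close> by simp
  qed simp
  finally show ?case using Suc by (simp add: sum.distrib add.assoc)
qed

lemma tri2: "(\<Sum>i\<le>(n::nat). \<Sum>j\<le>(m::nat). \<Sum>i'\<le>i. \<Sum>j'\<le>j. G i' i j' j)
   = (\<Sum>i'\<le>n. \<Sum>j'\<le>m. \<Sum>k\<le>n-i'. \<Sum>l\<le>m-j'. G i' (i'+k) j' (j'+l) :: 'a::comm_monoid_add)"
proof -
  have "(\<Sum>i\<le>n. \<Sum>j\<le>m. \<Sum>i'\<le>i. \<Sum>j'\<le>j. G i' i j' j) = (\<Sum>i\<le>n. \<Sum>i'\<le>i. \<Sum>j\<le>m. \<Sum>j'\<le>j. G i' i j' j)"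
    by (rule sum.cong[OF refl], rule sum.swap)
  also have "\<dots> = (\<Sum>i'\<le>n. \<Sum>k\<le>n-i'. \<Sum>j\<le>m. \<Sum>j'\<le>j. G i' (i'+k) j' j)"
    by (rule tri)
  also have "\<dots> = (\<Sum>i'\<le>n. \<Sum>k\<le>n-i'. \<Sum>j'\<le>m. \<Sum>l\<le>m-j'. G i' (i'+k) j' (j'+l))"
    by (intro sum.cong refl tri)
  also have "\<dots> = (\<Sum>i'\<le>n. \<Sum>j'\<le>m. \<Sum>k\<le>n-i'. \<Sum>l\<le>m-j'. G i' (i'+k) j' (j'+l))"
    by (rule sum.cong[OF refl], rule sum.swap)
  finally show ?thesis .
qed

lemma tmul_assoc: "tmul (tmul a b) c = tmul a (tmul b c)"
proof (rule ext, clarify)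
  fix u w :: "x2 list"
  define G where "G = (\<lambda>i' i j' j. a (take i' u, take j' w) * b (drop i' (take i u), drop j' (take j w)) * c (drop i u, drop j w))"
  have "tmul (tmul a b) c (u, w) = (\<Sum>i\<le>length u. \<Sum>j\<le>length w. \<Sum>i'\<le>i. \<Sum>j'\<le>j. G i' i j' j)"
    unfolding tmul_def G_def
    by (auto simp: sum_distrib_right min_absorb1 intro!: sum.cong)
  also have "\<dots> = (\<Sum>i'\<le>length u. \<Sum>j'\<le>length w. \<Sum>k\<le>length u-i'. \<Sum>l\<le>length w-j'. G i' (i'+k) j' (j'+l))"
    by (rule tri2)
  also have "\<dots> = tmul a (tmul b c) (u, w)"
    unfolding tmul_def G_def
    by (auto simp: sum_distrib_left mult.assoc drop_take add.commute intro!: sum.cong)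
  finally show "tmul (tmul a b) c (u, w) = tmul a (tmul b c) (u, w)" .
qed


lemma sum_apply_fun: "(\<Sum>k\<in>S. f k) p = (\<Sum>k\<in>S. f k p)"
  by (induction S rule: infinite_finite_induct) auto

lemma tadd_eq: "tadd a b = a + b" by (simp add: tadd_def fun_eq_iff)
lemma tneg_eq: "tneg a = - a" by (simp add: tneg_def fun_eq_iff)
lemma tzero_eq: "tzero = 0" by (simp add: tzero_def fun_eq_iff)

lemma tmul_add_left: "tmul (a + b) c = tmul a c + tmul b c"
  by (simp add: tmul_def fun_eq_iff distrib_right sum.distrib)
lemma tmul_add_right: "tmul a (b + c) = tmul a b + tmul a c"
  by (simp add: tmul_def fun_eq_iff distrib_left sum.distrib)
lemma tmul_minus_left: "tmul (- a) c = - tmul a c"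
  by (simp add: tmul_def fun_eq_iff sum_negf)
lemma tmul_minus_right: "tmul a (- c) = - tmul a c"
  by (simp add: tmul_def fun_eq_iff sum_negf)
lemma tmul_diff_left: "tmul (a - b) c = tmul a c - tmul b c"
  using tmul_add_left[of a "-b" c] by (simp add: tmul_minus_left)
lemma tmul_diff_right: "tmul a (b - c) = tmul a b - tmul a c"
  using tmul_add_right[of a b "-c"] by (simp add: tmul_minus_right)
lemma tmul_zero_left: "tmul 0 c = 0"
  by (simp add: tmul_def fun_eq_iff)
lemma tmul_zero_right: "tmul a 0 = 0"
  by (simp add: tmul_def fun_eq_iff)
lemma tmul_sum_left: "tmul (\<Sum>k\<in>S. f k) c = (\<Sum>k\<in>S. tmul (f k) c)"
  by (induction S rule: infinite_finite_induct) (simp_all only: not_False_eq_True sum.infinite sum.empty sum.insert tmul_zero_left tmul_add_left)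
lemma tmul_sum_right: "tmul c (\<Sum>k\<in>S. f k) = (\<Sum>k\<in>S. tmul c (f k))"
  by (induction S rule: infinite_finite_induct) (simp_all only: not_False_eq_True sum.infinite sum.empty sum.insert tmul_zero_right tmul_add_right)
lemma tmul_scal_left: "tmul (tscal c a) b = tscal c (tmul a b)"
  by (simp add: tmul_def tscal_def fun_eq_iff sum_distrib_left mult.assoc)
lemma tmul_scal_right: "tmul a (tscal c b) = tscal c (tmul a b)"
  by (simp add: tmul_def tscal_def fun_eq_iff sum_distrib_left mult.left_commute)

lemmas tmul_lin = tmul_add_left tmul_add_right tmul_minus_left tmul_minus_right
  tmul_diff_left tmul_diff_right tmul_zero_left tmul_zero_right tmul_sum_left tmul_sum_right

lemma split_take: "(\<Sum>i\<le>length u. if take i u = x then g i else 0) = (if take (length x) u = x then g (length x) else 0)"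
proof -
  have "(\<Sum>i\<le>length u. if take i u = x then g i else 0) = (\<Sum>i\<le>length u. if i = length x then (if take (length x) u = x then g i else 0) else 0)"
    by (rule sum.cong) auto
  also have "\<dots> = (if length x \<le> length u then (if take (length x) u = x then g (length x) else 0) else 0)"
    by (simp add: sum.delta')
  also have "\<dots> = (if take (length x) u = x then g (length x) else 0)"
    by auto
  finally show ?thesis .
qed

lemma split_drop: "(\<Sum>i\<le>length u. if drop i u = [] then g i else 0) = g (length u)"
proof -
  have "(\<Sum>i\<le>length u. if drop i u = [] then g i else 0) = (\<Sum>i\<le>length u. if i = length u then g i else 0)"
    by (rule sum.cong) auto
  then show ?thesis by (simp add: sum.delta')
qed

lemma tbasis_mul: "tmul (tbasis x y) (tbasis x' y') = tbasis (x @ x') (y @ y')"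
proof (rule ext, clarify)
  fix u w :: "x2 list"
  have "tmul (tbasis x y) (tbasis x' y') (u, w) =
     (\<Sum>i\<le>length u. if take i u = x then (\<Sum>j\<le>length w. if take j w = y then (if drop i u = x' \<and> drop j w = y' then 1 else 0) else 0) else 0)"
    unfolding tmul_def tbasis_def by (auto intro!: sum.cong)
  also have "\<dots> = (if take (length x) u = x \<and> take (length y) w = y \<and> drop (length x) u = x' \<and> drop (length y) w = y' then 1 else 0)"
    by (simp add: split_take)
  also have "\<dots> = tbasis (x @ x') (y @ y') (u, w)"
    unfolding tbasis_def by (auto simp: append_eq_conv_conj) (metis append_take_drop_id)+
  finally show "tmul (tbasis x y) (tbasis x' y') (u, w) = tbasis (x @ x') (y @ y') (u, w)" .
qed

lemma tone_left: "tmul tone a = a"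
proof (rule ext, clarify)
  fix u w :: "x2 list"
  have "tmul tone a (u, w) =
     (\<Sum>i\<le>length u. if take i u = [] then (\<Sum>j\<le>length w. if take j w = [] then a (drop i u, drop j w) else 0) else 0)"
    unfolding tmul_def tone_def tbasis_def by (auto intro!: sum.cong)
  also have "\<dots> = a (u, w)"
    by (simp only: split_take) simp
  finally show "tmul tone a (u, w) = a (u, w)" .
qed

lemma tone_right: "tmul a tone = a"
proof (rule ext, clarify)
  fix u w :: "x2 list"
  have "tmul a tone (u, w) =
     (\<Sum>i\<le>length u. \<Sum>j\<le>length w. if i = length u \<and> j = length w then a (u, w) else 0)"
    unfolding tmul_def tone_def tbasis_def
    apply (simp only: prod.case)
    apply (intro sum.cong refl)
    apply auto
    done
  also have "\<dots> = (\<Sum>i\<le>length u. if i = length u then (\<Sum>j\<le>length w. if j = length w then a (u, w) else 0) else 0)"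
    by (rule sum.cong[OF refl], simp)
  also have "\<dots> = a (u, w)"
    by (simp only: sum.delta finite_atMost) simp
  finally show "tmul a tone (u, w) = a (u, w)" .
qed

lemma flip_sum: "(\<Sum>i\<le>(n::nat). f i) = (\<Sum>i\<le>n. f (n - i))"
  by (rule sum.reindex_bij_witness[where i="\<lambda>i. n - i" and j="\<lambda>i. n - i"]) auto

lemma tS_tmul: "tS (tmul a b) = tmul (tS b) (tS a)"
proof (rule ext, clarify)
  fix u w :: "x2 list"
  let ?s = "\<lambda>n. (-1::'a) ^ n"
  have "tS (tmul a b) (u, w) = ?s (length u + length w) * (\<Sum>i\<le>length u. \<Sum>j\<le>length w.
      a (take i (rev u), take j (rev w)) * b (drop i (rev u), drop j (rev w)))"
    by (simp add: tS_def tmul_def)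
  also have "\<dots> = ?s (length u + length w) * (\<Sum>i\<le>length u. \<Sum>j\<le>length w.
      a (take (length u - i) (rev u), take (length w - j) (rev w)) * b (drop (length u - i) (rev u), drop (length w - j) (rev w)))"
    by (subst flip_sum, subst flip_sum, rule refl)
  also have "\<dots> = (\<Sum>i\<le>length u. \<Sum>j\<le>length w.
      (?s (i + j) * b (rev (take i u), rev (take j w))) * (?s (length u - i + (length w - j)) * a (rev (drop i u), rev (drop j w))))"
    unfolding sum_distrib_left
  proof (intro sum.cong refl)
    fix i j assume i: "i \<in> {..length u}" and j: "j \<in> {..length w}"
    have e: "?s (length u + length w) = ?s (i + j) * ?s (length u - i + (length w - j))"
      using i j by (simp add: power_add[symmetric])
    show "?s (length u + length w) * (a (take (length u - i) (rev u), take (length w - j) (rev w)) * b (drop (length u - i) (rev u), drop (length w - j) (rev w))) =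
      (?s (i + j) * b (rev (take i u), rev (take j w))) * (?s (length u - i + (length w - j)) * a (rev (drop i u), rev (drop j w)))"
      using i j unfolding e by (simp add: take_rev drop_rev mult_ac)
  qed
  also have "\<dots> = tmul (tS b) (tS a) (u, w)"
    by (simp add: tS_def tmul_def add_ac)
  finally show "tS (tmul a b) (u, w) = tmul (tS b) (tS a) (u, w)" .
qed

lemma tS_add: "tS (a + b) = tS a + tS b" by (simp add: tS_def fun_eq_iff distrib_left)
lemma tS_minus: "tS (- a) = - tS a" by (simp add: tS_def fun_eq_iff)
lemma tS_diff: "tS (a - b) = tS a - tS b" by (simp add: tS_def fun_eq_iff right_diff_distrib)
lemma tS_zero: "tS 0 = 0" by (simp add: tS_def fun_eq_iff)
lemma tS_sum: "tS (\<Sum>k\<in>S. f k) = (\<Sum>k\<in>S. tS (f k))"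
  by (induction S rule: infinite_finite_induct) (simp_all only: not_False_eq_True sum.infinite sum.empty sum.insert tS_zero tS_add)
lemma tS_basis: "tS (tbasis x y) = tscal ((-1) ^ (length x + length y)) (tbasis (rev x) (rev y))"
  by (auto simp: tS_def tscal_def tbasis_def fun_eq_iff)
lemma tS_tone: "tS tone = tone"
  by (simp add: tone_def tS_basis tscal_def)


lemma tscal_one: "tscal 1 a = a" by (simp add: tscal_def)
lemma tscal_m1: "tscal (-1) a = - a" by (simp add: tscal_def fun_eq_iff)
lemma tscal_tscal: "tscal c (tscal d a) = tscal (c * d) a" by (simp add: tscal_def mult.assoc)
lemma tS_tscal: "tS (tscal c a) = tscal c (tS a)" by (simp add: tS_def tscal_def fun_eq_iff mult_ac)
lemma tscal_sum: "tscal c (\<Sum>k\<in>S. f k) = (\<Sum>k\<in>S. tscal c (f k))"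
  by (simp add: tscal_def fun_eq_iff sum_apply_fun sum_distrib_left)

lemma dWw_rep: "dWw n (replicate m X0 @ v) = dWw (n + m) v"
  by (induction m arbitrary: n) auto

lemma dWw_app: "u \<noteq> [] \<Longrightarrow> last u = X1 \<Longrightarrow> dWw n (u @ v) = tmul (dWw n u) (dWw 0 v)"
proof (induction u arbitrary: n)
  case Nil then show ?case by simp
next
  case (Cons x u')
  show ?case
  proof (cases x)
    case X0
    then have "u' \<noteq> []" "last u' = X1" using Cons.prems by (auto split: if_splits)
    then show ?thesis using Cons.IH X0 by simp
  next
    case X1
    show ?thesis
    proof (cases "u' = []")
      case True then show ?thesis using X1 by (simp add: tone_right)
    next
      case False
      then have "last u' = X1" using Cons.prems by auto
      then show ?thesis using Cons.IH[of 0] X1 False by (simp add: tmul_assoc)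
    qed
  qed
qed

lemma dWw_gen: "u = [] \<or> last u = X1 \<Longrightarrow> dWw 0 (u @ replicate m X0 @ [X1]) = tmul (dWw 0 u) (dgen m)"
proof (cases "u = []")
  case True then show ?thesis by (simp add: dWw_rep tone_right tone_left)
next
  case False
  assume "u = [] \<or> last u = X1"
  then have "last u = X1" using False by simp
  then show ?thesis using False by (simp add: dWw_app dWw_rep tone_right)
qed

lemma dgen_eq: "dgen m = tbasis (replicate m X0 @ [X1]) [] + tbasis [] (replicate m X0 @ [X1])
   - (\<Sum>k<m. tbasis (replicate k X0 @ [X1]) (replicate (m - k - 1) X0 @ [X1]))"
  by (simp add: dgen_def fun_eq_iff sum_apply_fun)

definition Rm :: "x2 list \<Rightarrow> nat \<Rightarrow> nat \<Rightarrow> ('k::comm_ring_1) tens" where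
  "Rm w i j = tscal ((-1) ^ length w) (tS (rho_word (rev w) j i))"

definition rvec :: "x2 list \<Rightarrow> nat \<Rightarrow> ('k::comm_ring_1) tens" where
  "rvec w j = Rm w 0 j - Rm w 1 j"

lemma less3: "(j::nat) < 3 \<Longrightarrow> j = 0 \<or> j = 1 \<or> j = 2" by arith

lemma tS_rl: "j < 3 \<Longrightarrow> k < 3 \<Longrightarrow> tS (rho_letter x j k) = - rho_letter x j k"
  apply (drule less3, drule less3)
  apply (cases x)
  apply (auto simp: mat_of_rows_def tadd_eq tneg_eq tzero_eq teinf_def tS_add tS_minus tS_diff tS_zero
     teg_def tfg_def tS_basis tscal_m1)
  done

lemma matmul_eq: "matmul A B j i = (\<Sum>k<3. tmul (A j k) (B k i))"
  by (simp add: matmul_def fun_eq_iff sum_apply_fun)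

lemma Rm_snoc: "j < 3 \<Longrightarrow> Rm (w @ [x]) i j = (\<Sum>k<3. tmul (Rm w i k) (rho_letter x j k))"
proof -
  assume j: "j < 3"
  have "Rm (w @ [x]) i j = tscal ((-1) ^ length w) (tscal (-1) (\<Sum>k<3. tS (tmul (rho_letter x j k) (rho_word (rev w) k i))))"
    by (simp add: Rm_def rho_word_def matmul_eq tS_sum tscal_tscal mult.commute)
  also have "\<dots> = (\<Sum>k<3. tmul (Rm w i k) (rho_letter x j k))"
    unfolding tscal_sum
  proof (rule sum.cong[OF refl])
    fix k assume "k \<in> {..<3::nat}"
    then have k: "k < 3" by simp
    show "tscal ((-1) ^ length w) (tscal (-1) (tS (tmul (rho_letter x j k) (rho_word (rev w) k i)))) =
      tmul (Rm w i k) (rho_letter x j k)"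
      by (simp add: tS_tmul tS_rl[OF j k] Rm_def tmul_scal_left tmul_minus_right tscal_m1)
  qed
  finally show ?thesis .
qed

lemma rvec_snoc: "j < 3 \<Longrightarrow> rvec (w @ [x]) j = (\<Sum>k<3. tmul (rvec w k) (rho_letter x j k))"
  by (simp add: rvec_def Rm_snoc sum_subtractf[symmetric] tmul_diff_left)

lemma rvec_Nil: "rvec [] 0 = tone" "rvec [] 1 = - tone" "rvec [] 2 = 0"
  by (simp_all add: rvec_def Rm_def rho_word_def matid_def tS_tone tscal_one tzero_eq tS_zero)


lemmas expand3 = numeral_3_eq_3 lessThan_Suc

lemma rvec_X1:
  "rvec (w @ [X1]) 0 = tmul (rvec w 0) (teg X1) - tmul (rvec w 1) (tfg X1)"
  "rvec (w @ [X1]) 1 = tmul (rvec w 1) (tfg X1) - tmul (rvec w 0) (teg X1)"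
  "rvec (w @ [X1]) 2 = 0"
  by (simp_all add: rvec_snoc expand3 mat_of_rows_def tneg_eq tzero_eq tmul_lin)

lemma rvec_X0:
  assumes c: "(rvec w 2 :: 'k::comm_ring_1 tens) = - rvec w 0 - rvec w 1"
  shows "(rvec (w @ [X0]) 0 :: 'k tens) = tmul (rvec w 0) (teg X0)"
    "(rvec (w @ [X0]) 1 :: 'k tens) = tmul (rvec w 1) (tfg X0) + tmul (rvec w 0) (teg X1)"
    "(rvec (w @ [X0]) 2 :: 'k tens) = - rvec (w @ [X0]) 0 - rvec (w @ [X0]) 1"
proof -
  note c' = c[unfolded numeral_2_eq_2 One_nat_def]
  show "(rvec (w @ [X0]) 0 :: 'k tens) = tmul (rvec w 0) (teg X0)"
    by (simp add: rvec_snoc expand3 mat_of_rows_def tneg_eq tzero_eq tmul_lin)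
  show "(rvec (w @ [X0]) 1 :: 'k tens) = tmul (rvec w 1) (tfg X0) + tmul (rvec w 0) (teg X1)"
    by (simp add: rvec_snoc expand3 mat_of_rows_def tneg_eq tzero_eq tadd_eq tmul_lin c c' One_nat_def algebra_simps)
  show "(rvec (w @ [X0]) 2 :: 'k tens) = - rvec (w @ [X0]) 0 - rvec (w @ [X0]) 1"
    by (simp add: rvec_snoc expand3 mat_of_rows_def tneg_eq tzero_eq tadd_eq teinf_def tmul_lin c c' One_nat_def algebra_simps)
qed

lemma keyK:
  assumes a: "a = tmul D (tbasis (replicate m X0) [])"
    and b: "b = - tmul D (tbasis [] (replicate m X0)) + (\<Sum>k<m. tmul D (tbasis (replicate k X0 @ [X1]) (replicate (m - k - 1) X0)))"
  shows "tmul a (teg X1) - tmul b (tfg X1) = tmul D (dgen m)"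
  by (simp add: a b dgen_eq tmul_lin tmul_assoc tbasis_mul teg_def tfg_def algebra_simps)

lemma final_row: "(\<Sum>j<3. tmul (rvec w j) (rcol ! j)) = tmul (rvec w 0) (teg X1) - tmul (rvec w 1) (tfg X1)"
  by (simp add: expand3 rcol_def tneg_eq tzero_eq tmul_lin)


lemma rep_shift: "k < m \<Longrightarrow> replicate (m - k - 1) X0 @ [X0] = replicate (Suc m - k - 1) X0"
proof -
  assume "k < m"
  then have "Suc m - k - 1 = Suc (m - k - 1)" by arith
  then show ?thesis by (simp add: replicate_append_same)
qed

lemma inv_rvec:
  "\<exists>u m. w = u @ replicate m X0 \<and> (u = [] \<or> last u = X1) \<and>
     (rvec w 0 :: 'k::comm_ring_1 tens) = tmul (dWw 0 u) (tbasis (replicate m X0) []) \<and>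
     (rvec w 1 :: 'k tens) = - tmul (dWw 0 u) (tbasis [] (replicate m X0))
        + (\<Sum>k<m. tmul (dWw 0 u) (tbasis (replicate k X0 @ [X1]) (replicate (m - k - 1) X0))) \<and>
     (rvec w 2 :: 'k tens) = - rvec w 0 - rvec w 1"
proof (induction w rule: rev_induct)
  case Nil
  have t: "tbasis [] [] = (tone :: 'k tens)" by (simp add: tone_def)
  show ?case
    by (rule exI[of _ "[]"], rule exI[of _ 0]) (simp add: rvec_Nil rvec_Nil[unfolded One_nat_def numeral_2_eq_2] t tone_right)
next
  case (snoc x w)
  then obtain u m where w: "w = u @ replicate m X0" and u: "u = [] \<or> last u = X1"
    and a: "(rvec w 0 :: 'k tens) = tmul (dWw 0 u) (tbasis (replicate m X0) [])"
    and b: "(rvec w 1 :: 'k tens) = - tmul (dWw 0 u) (tbasis [] (replicate m X0))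
        + (\<Sum>k<m. tmul (dWw 0 u) (tbasis (replicate k X0 @ [X1]) (replicate (m - k - 1) X0)))"
    and c: "(rvec w 2 :: 'k tens) = - rvec w 0 - rvec w 1"
    by blast
  define D :: "'k tens" where "D = dWw 0 u"
  show ?case
  proof (cases x)
    case X0
    have r0: "(rvec (w @ [X0]) 0 :: 'k tens) = tmul D (tbasis (replicate (Suc m) X0) [])"
      using rvec_X0(1)[OF c] a by (simp add: D_def tmul_assoc tbasis_mul teg_def replicate_append_same)
    have "(rvec (w @ [X0]) 1 :: 'k tens) = tmul (rvec w 1) (tfg X0) + tmul (rvec w 0) (teg X1)"
      by (rule rvec_X0(2)[OF c])
    also have "\<dots> = - tmul D (tbasis [] (replicate m X0 @ [X0]))
        + (\<Sum>k<m. tmul D (tbasis (replicate k X0 @ [X1]) (replicate (m - k - 1) X0 @ [X0])))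
        + tmul D (tbasis (replicate m X0 @ [X1]) [])"
      unfolding a b D_def by (simp add: tmul_lin tmul_assoc tbasis_mul teg_def tfg_def)
    also have "(\<Sum>k<m. tmul D (tbasis (replicate k X0 @ [X1]) (replicate (m - k - 1) X0 @ [X0])))
       = (\<Sum>k<m. tmul D (tbasis (replicate k X0 @ [X1]) (replicate (Suc m - k - 1) X0)))"
      apply (rule sum.cong[OF refl])
      apply (subst rep_shift)
       apply auto
      done
    also have "- tmul D (tbasis [] (replicate m X0 @ [X0])) + (\<Sum>k<m. tmul D (tbasis (replicate k X0 @ [X1]) (replicate (Suc m - k - 1) X0)))
        + tmul D (tbasis (replicate m X0 @ [X1]) [])
        = - tmul D (tbasis [] (replicate (Suc m) X0)) + (\<Sum>k<Suc m. tmul D (tbasis (replicate k X0 @ [X1]) (replicate (Suc m - k - 1) X0)))"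
      by (simp add: replicate_append_same algebra_simps)
    finally have r1: "(rvec (w @ [X0]) 1 :: 'k tens) = - tmul D (tbasis [] (replicate (Suc m) X0))
       + (\<Sum>k<Suc m. tmul D (tbasis (replicate k X0 @ [X1]) (replicate (Suc m - k - 1) X0)))" .
    show ?thesis
      apply (rule exI[of _ u], rule exI[of _ "Suc m"])
      using r0 r1 rvec_X0(3)[OF c] u X0 w by (simp add: D_def replicate_append_same)
  next
    case X1
    have "(rvec (w @ [X1]) 0 :: 'k tens) = tmul (rvec w 0) (teg X1) - tmul (rvec w 1) (tfg X1)"
      by (rule rvec_X1(1))
    also have "\<dots> = tmul (dWw 0 u) (dgen m)" by (rule keyK[OF a b])
    also have "\<dots> = dWw 0 (w @ [X1])" by (simp add: w dWw_gen[OF u])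
    finally have K: "(rvec (w @ [X1]) 0 :: 'k tens) = dWw 0 (w @ [X1])" .
    have t: "tbasis [] [] = (tone :: 'k tens)" by (simp add: tone_def)
    have r1: "(rvec (w @ [X1]) 1 :: 'k tens) = - rvec (w @ [X1]) 0"
      by (simp only: rvec_X1(1) rvec_X1(2)) simp
    have r2: "(rvec (w @ [X1]) 2 :: 'k tens) = 0" by (rule rvec_X1(3))
    show ?thesis
      unfolding X1
      apply (rule exI[of _ "w @ [X1]"], rule exI[of _ 0])
      apply (simp only: r1 r2 K)
      apply (simp add: t tone_right)
      done
  qed
qed

lemma word_main: "(\<Sum>j<3. tmul (rvec w j) (rcol ! j)) = (dWw 0 (w @ [X1]) :: 'k::comm_ring_1 tens)"
proof -
  obtain u m where w: "w = u @ replicate m X0" and u: "u = [] \<or> last u = X1"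
    and a: "(rvec w 0 :: 'k tens) = tmul (dWw 0 u) (tbasis (replicate m X0) [])"
    and b: "(rvec w 1 :: 'k tens) = - tmul (dWw 0 u) (tbasis [] (replicate m X0))
        + (\<Sum>k<m. tmul (dWw 0 u) (tbasis (replicate k X0 @ [X1]) (replicate (m - k - 1) X0)))"
    using inv_rvec[of w] by blast
  have "(\<Sum>j<3. tmul (rvec w j) (rcol ! j)) = (tmul (rvec w 0) (teg X1) - tmul (rvec w 1) (tfg X1) :: 'k tens)"
    by (rule final_row)
  also have "\<dots> = tmul (dWw 0 u) (dgen m)" by (rule keyK[OF a b])
  also have "\<dots> = dWw 0 (w @ [X1])" by (simp add: w dWw_gen[OF u])
  finally show ?thesis .
qed


lemma drop_eq_X1: "i \<le> length u \<Longrightarrow> (drop i u = [X1]) = (u \<noteq> [] \<and> i = length u - 1 \<and> last u = X1)"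
  by (cases u rule: rev_cases) (auto simp: drop_Cons' drop_append split: if_splits, (metis Suc_diff_le diff_is_0_eq drop_eq_Nil length_drop list.inject list.size(3) nat.inject not_Cons_self)?)

lemma ncmul_gen: "ncmul v (ncgen X1) u = (if u \<noteq> [] \<and> last u = X1 then v (butlast u) else 0)"
proof -
  have "ncmul v (ncgen X1) u = (\<Sum>i\<le>length u. if i = length u - 1 then (if u \<noteq> [] \<and> last u = X1 then v (take i u) else 0) else 0)"
    unfolding ncmul_def ncgen_def
    by (rule sum.cong[OF refl]) (auto simp: drop_eq_X1)
  also have "\<dots> = (if u \<noteq> [] \<and> last u = X1 then v (butlast u) else 0)"
    by (simp add: sum.delta butlast_conv_take)
  finally show ?thesis .
qed


lemma LHS_eq:
  fixes lam :: "'k::comm_ring_1" and v :: "'k ncp"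
  assumes fin: "finite (ncsupp v)"
  shows "DeltaW (ncadd (ncscal lam ncone) (ncmul v (ncgen X1)))
     = (\<lambda>p. lam * tone p + (\<Sum>w\<in>ncsupp v. v w * dWw 0 (w @ [X1]) p))"
proof (rule ext)
  fix p
  define X where "X = ncadd (ncscal lam ncone) (ncmul v (ncgen X1))"
  have Xe: "X u = (if u = [] then lam else 0) + (if u \<noteq> [] \<and> last u = X1 then v (butlast u) else 0)" for u
    by (simp add: X_def ncadd_def ncscal_def ncone_def ncmul_gen)
  define T where "T = insert [] ((\<lambda>w. w @ [X1]) ` ncsupp v)"
  have finT: "finite T" using fin by (simp add: T_def)
  have sub: "ncsupp X \<subseteq> T"
  proof
    fix u assume "u \<in> ncsupp X"
    then have "X u \<noteq> 0" by (simp add: ncsupp_def)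
    show "u \<in> T"
    proof (cases "u = []")
      case True then show ?thesis by (simp add: T_def)
    next
      case False
      with \<open>X u \<noteq> 0\<close> have l: "last u = X1" and vb: "v (butlast u) \<noteq> 0"
        by (auto simp: Xe split: if_splits)
      have "u = butlast u @ [X1]" using False l by (metis append_butlast_last_id)
      then show ?thesis using vb by (auto simp: T_def ncsupp_def)
    qed
  qed
  have "DeltaW X p = (\<Sum>w\<in>T. X w * dWw 0 w p)"
    unfolding DeltaW_def
    by (rule sum.mono_neutral_left[OF finT sub]) (auto simp: ncsupp_def)
  also have "\<dots> = X [] * dWw 0 [] p + (\<Sum>w\<in>(\<lambda>w. w @ [X1]) ` ncsupp v. X w * dWw 0 w p)"
    unfolding T_def using fin by (subst sum.insert) auto
  also have "(\<Sum>w\<in>(\<lambda>w. w @ [X1]) ` ncsupp v. X w * dWw 0 w p) = (\<Sum>w\<in>ncsupp v. X (w @ [X1]) * dWw 0 (w @ [X1]) p)"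
    by (subst sum.reindex) (auto simp: inj_on_def)
  also have "\<dots> = (\<Sum>w\<in>ncsupp v. v w * dWw 0 (w @ [X1]) p)"
    by (simp add: Xe)
  also have "X [] * dWw 0 [] p = lam * tone p"
    by (simp add: Xe)
  finally have main: "DeltaW X p = lam * tone p + (\<Sum>w\<in>ncsupp v. v w * dWw 0 (w @ [X1]) p)" .
  then show "DeltaW (ncadd (ncscal lam ncone) (ncmul v (ncgen X1))) p = lam * tone p + (\<Sum>w\<in>ncsupp v. v w * dWw 0 (w @ [X1]) p)"
    by (simp only: X_def)
qed

lemma m1_pow_mult_eq0: "((-1::'a::comm_ring_1) ^ n * x = 0) = (x = 0)"
proof
  assume h: "(-1::'a) ^ n * x = 0"
  have "x = ((-1::'a) ^ n * (-1) ^ n) * x" by (simp add: power_mult_distrib[symmetric])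
  also have "\<dots> = (-1) ^ n * ((-1) ^ n * x)" by (simp only: mult.assoc)
  finally show "x = 0" using h by simp
qed simp

lemma ncsupp_ncS: "ncsupp (ncS v) = rev ` (ncsupp (v :: 'k::comm_ring_1 ncp))"
proof -
  have "(ncS v w \<noteq> 0) = (v (rev w) \<noteq> 0)" for w
    by (simp add: ncS_def m1_pow_mult_eq0)
  then show ?thesis
    unfolding ncsupp_def by (auto simp: image_iff) (metis rev_rev_ident)+
qed

lemma rrho_eq:
  fixes v :: "'k::comm_ring_1 ncp"
  assumes fin: "finite (ncsupp v)"
  shows "rrho v i j = (\<Sum>w\<in>ncsupp v. tscal (v w) (Rm w i j))"
proof -
  have "rho (ncS v) j i = (\<lambda>p. \<Sum>w\<in>rev ` ncsupp v. ncS v w * rho_word w j i p)"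
    by (simp add: rho_def ncsupp_ncS)
  also have "\<dots> = (\<lambda>p. \<Sum>w\<in>ncsupp v. ncS v (rev w) * rho_word (rev w) j i p)"
    by (subst sum.reindex) (auto simp: inj_on_def)
  also have "\<dots> = (\<Sum>w\<in>ncsupp v. tscal (v w) (tscal ((-1) ^ length w) (rho_word (rev w) j i)))"
    by (simp add: fun_eq_iff sum_apply_fun tscal_def ncS_def mult_ac)
  finally show ?thesis
    by (simp add: rrho_def tS_sum tS_tscal Rm_def)
qed

lemma row_lemma: "(\<Sum>i<3. \<Sum>j<3. tmul (tmul (rrow ! i) (Rm w i j)) (rcol ! j)) = (\<Sum>j<3. tmul (rvec w j) (rcol ! j))"
  apply (subst sum.swap)
  apply (rule sum.cong[OF refl])
  apply (simp add: expand3 rrow_def tneg_eq tzero_eq tmul_lin tone_left rvec_def)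
  done


theorem theorem3p18:
  fixes lam :: "'k::comm_ring_1" and v :: "'k ncp"
  assumes Qalg: "\<And>n::nat. n \<noteq> 0 \<Longrightarrow> \<exists>y::'k. of_nat n * y = 1"
    and fin: "finite (ncsupp v)"
  shows "DeltaW (ncadd (ncscal lam ncone) (ncmul v (ncgen X1))) = DeltaO lam v"
proof -
  have "(\<Sum>i<3. \<Sum>j<3. tmul (tmul (rrow ! i) (rrho v i j)) (rcol ! j))
      = (\<Sum>i<3. \<Sum>j<3. \<Sum>w\<in>ncsupp v. tscal (v w) (tmul (tmul (rrow ! i) (Rm w i j)) (rcol ! j)))"
    by (simp add: rrho_eq[OF fin] tmul_sum_left tmul_sum_right tmul_scal_left tmul_scal_right)
  also have "\<dots> = (\<Sum>i<3. \<Sum>w\<in>ncsupp v. \<Sum>j<3. tscal (v w) (tmul (tmul (rrow ! i) (Rm w i j)) (rcol ! j)))"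
    by (rule sum.cong[OF refl], rule sum.swap)
  also have "\<dots> = (\<Sum>w\<in>ncsupp v. \<Sum>i<3. \<Sum>j<3. tscal (v w) (tmul (tmul (rrow ! i) (Rm w i j)) (rcol ! j)))"
    by (rule sum.swap)
  also have "\<dots> = (\<Sum>w\<in>ncsupp v. tscal (v w) (dWw 0 (w @ [X1])))"
  proof (rule sum.cong[OF refl])
    fix w
    have "(\<Sum>i<3. \<Sum>j<3. tscal (v w) (tmul (tmul (rrow ! i) (Rm w i j)) (rcol ! j)))
       = tscal (v w) (\<Sum>i<3. \<Sum>j<3. tmul (tmul (rrow ! i) (Rm w i j)) (rcol ! j))"
      by (simp add: tscal_sum)
    also have "\<dots> = tscal (v w) (dWw 0 (w @ [X1]))"
      by (simp only: row_lemma word_main)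
    finally show "(\<Sum>i<3. \<Sum>j<3. tscal (v w) (tmul (tmul (rrow ! i) (Rm w i j)) (rcol ! j)))
       = tscal (v w) (dWw 0 (w @ [X1]))" .
  qed
  finally have S: "(\<Sum>i<3. \<Sum>j<3. tmul (tmul (rrow ! i) (rrho v i j)) (rcol ! j))
      = (\<Sum>w\<in>ncsupp v. tscal (v w) (dWw 0 (w @ [X1])))" .
  have "DeltaO lam v = (\<lambda>p. lam * tone p + (\<Sum>i<3. \<Sum>j<3. tmul (tmul (rrow ! i) (rrho v i j)) (rcol ! j)) p)"
    by (simp add: DeltaO_def sum_apply_fun)
  also have "\<dots> = (\<lambda>p. lam * tone p + (\<Sum>w\<in>ncsupp v. v w * dWw 0 (w @ [X1]) p))"
    by (simp only: S sum_apply_fun tscal_def)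
  finally show ?thesis by (simp only: LHS_eq[OF fin])
qed

end
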